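(* Let $N$ be an odd prime and let $D$ be a square-free integer such that the Legendre symbol satisfies $\left(\frac{D}{N}\right) = -1$. Write $N + 1 = 2^s u$, where $u$ is an odd integer and $s \ge 1$. For any $w \in \mathcal{G}_N(D) \setminus \{1, -1\}$, one of the following conditions must hold: (a) $w^u \equiv 1 \pmod N$; (b) $w^{2^r u} \equiv -1 \pmod N$ for some integer $0 \le r < s$.
   Context: For an integer $n \ge 2$ and a square-free integer $D$: if $D \equiv 2,3 \pmod 4$, let $\mathcal{I}_n(D) = \{a + b\sqrt{D} : a,b \in \mathbb{Z}/n\mathbb{Z}\}$ (the ring $\mathbb{Z}[\sqrt D]/n\mathbb{Z}[\sqrt D]$) and $\mathcal{G}_n(D) = \{a + b\sqrt{D} \in \mathcal{I}_n(D) : a^2 - Db^2 \equiv 1 \pmod n\}$; if $D \equiv 1 \pmod 4$, let $\omega = \frac{1+\sqrt D}{2}$, $\mathcal{I}_n(D) = \{a + b\omega : a,b \in \mathbb{Z}/n\mathbb{Z}\}$ (the ring $\mathbb{Z}[\omega]/n\mathbb{Z}[\omega]$) and $\mathcal{G}_n(D) = \{a + b\omega \in \mathcal{I}_n(D) : a^2 + ab + \frac{1-D}{4} b^2 \equiv 1 \pmod n\}$. Powers are computed in $\mathcal{I}_n(D)$ and a congruence $x \equiv y \pmod n$ for $x,y \in \mathcal{I}_n(D)$ means equality in $\mathcal{I}_n(D)$. *)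

theory Defs
  imports "HOL-Number_Theory.Number_Theory" "HOL-Computational_Algebra.Squarefree"
begin

text \<open>Elements of I_n(D) are represented as pairs (a, b) of integers reduced mod n,
  standing for a + b sqrt D (if D mod 4 is 2 or 3) or a + b omega, omega = (1 + sqrt D)/2
  (if D mod 4 = 1).\<close>

type_synonym qelem = "int \<times> int"

definition qred :: "int \<Rightarrow> qelem \<Rightarrow> qelem" where
  "qred n x = (fst x mod n, snd x mod n)"

definition qmul :: "int \<Rightarrow> int \<Rightarrow> qelem \<Rightarrow> qelem \<Rightarrow> qelem" where
  "qmul n D x y =
     (let (a, b) = x; (c, d) = y in
      if D mod 4 = 1
      then qred n (a * c + b * d * ((D - 1) div 4), a * d + b * c + b * d)
      else qred n (a * c + D * b * d, a * d + b * c))"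

definition qone :: "int \<Rightarrow> qelem" where
  "qone n = qred n (1, 0)"

definition qneg_one :: "int \<Rightarrow> qelem" where
  "qneg_one n = qred n (-1, 0)"

fun qpow :: "int \<Rightarrow> int \<Rightarrow> qelem \<Rightarrow> nat \<Rightarrow> qelem" where
  "qpow n D x 0 = qone n"
| "qpow n D x (Suc k) = qmul n D x (qpow n D x k)"

definition qI :: "int \<Rightarrow> qelem set" where
  "qI n = {(a, b). 0 \<le> a \<and> a < n \<and> 0 \<le> b \<and> b < n}"

definition qnorm :: "int \<Rightarrow> qelem \<Rightarrow> int" where
  "qnorm D x = (let (a, b) = x in
     if D mod 4 = 1 then a^2 + a * b + ((1 - D) div 4) * b^2 else a^2 - D * b^2)"

definition qG :: "int \<Rightarrow> int \<Rightarrow> qelem set" where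
  "qG n D = {x \<in> qI n. [qnorm D x = 1] (mod n)}"

end

theory Submission
  imports Defs "HOL-Computational_Algebra.Polynomial"
begin


lemma binom_prime:
  fixes p q :: "'a::comm_ring_1" and n :: nat
  assumes "prime n"
  shows "\<exists>A. (p+q)^n = p^n + q^n + of_nat n * A"
proof -
  have n1: "n \<ge> 1" using assms prime_ge_1_nat by blast
  have n0: "n \<noteq> 0" using n1 by simp
  have "(p + q) ^ n = (\<Sum>k\<le>n. of_nat (n choose k) * p ^ k * q ^ (n - k))"
    by (rule binomial_ring)
  also have "{..n} = insert 0 (insert n {1..<n})" using n1 by auto
  also have "(\<Sum>k\<in>insert 0 (insert n {1..<n}). of_nat (n choose k) * p ^ k * q ^ (n - k))
     = q^n + (p^n + (\<Sum>k\<in>{1..<n}. of_nat (n choose k) * p ^ k * q ^ (n - k)))"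
    using n1 by (simp add: sum.insert)
  also have "(\<Sum>k\<in>{1..<n}. of_nat (n choose k) * p ^ k * q ^ (n - k))
     = (\<Sum>k\<in>{1..<n}. of_nat n * (of_nat ((n choose k) div n) * p ^ k * q ^ (n - k)))"
  proof (rule sum.cong)
    fix k assume "k \<in> {1..<n}"
    then have "n dvd (n choose k)" using dvd_choose_prime[of k n] assms n0 by auto
    then have "(n choose k) = n * ((n choose k) div n)" by simp
    then have "(of_nat (n choose k) :: 'a) = of_nat n * of_nat ((n choose k) div n)"
      by (metis of_nat_mult)
    then show "of_nat (n choose k) * p ^ k * q ^ (n - k) = of_nat n * (of_nat ((n choose k) div n) * p ^ k * q ^ (n - k))"
      by (simp add: mult.assoc)
  qed simp
  also have "\<dots> = of_nat n * (\<Sum>k\<in>{1..<n}. of_nat ((n choose k) div n) * p ^ k * q ^ (n - k))"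
    by (simp add: sum_distrib_left)
  finally have "(p + q) ^ n = q ^ n + (p ^ n + of_nat n * (\<Sum>k\<in>{1..<n}. of_nat ((n choose k) div n) * p ^ k * q ^ (n - k)))" .
  then have "(p + q) ^ n = p ^ n + q ^ n + of_nat n * (\<Sum>k\<in>{1..<n}. of_nat ((n choose k) div n) * p ^ k * q ^ (n - k))"
    by (simp only: add.assoc[symmetric] add.commute[of "q^n" "p^n"])
  then show ?thesis by blast
qed

lemma fermat_nat_int:
  fixes N :: int and m :: nat
  assumes "prime N"
  shows "[int m ^ nat N = int m] (mod N)"
proof (induction m)
  case 0
  have "nat N > 0" using assms prime_gt_0_int by fastforce
  then obtain n where "nat N = Suc n" using gr0_conv_Suc by blast
  then show ?case by simp
next
  case (Suc m)
  have pn: "prime (nat N)" using assms by simp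
  obtain A where A: "(int m + 1)^nat N = int m ^ nat N + 1 ^ nat N + of_nat (nat N) * A"
    using binom_prime[OF pn, of "int m" 1] by blast
  have N0: "N \<ge> 0" using assms prime_ge_0_int by blast
  have "(int m + 1)^nat N = (int m ^ nat N + 1) + N * A" using A N0 by simp
  then have "[(int m + 1)^nat N = int m ^ nat N + 1] (mod N)"
    by (simp add: cong_def)
  also have "[int m ^ nat N + 1 = int m + 1] (mod N)" using Suc cong_add_rcancel by blast
  finally show ?case by (simp add: add.commute)
qed

lemma fermat_int:
  fixes N a :: int
  assumes "prime N"
  shows "[a ^ nat N = a] (mod N)"
proof -
  have N0: "N > 0" using assms prime_gt_0_int by blast
  have "[a = int (nat (a mod N))] (mod N)" using N0 by (simp add: cong_def)
  then have "[a ^ nat N = int (nat (a mod N)) ^ nat N] (mod N)" by (rule cong_pow)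
  also have "[int (nat (a mod N)) ^ nat N = int (nat (a mod N))] (mod N)" by (rule fermat_nat_int[OF assms])
  also have "[int (nat (a mod N)) = a] (mod N)" using N0 by (simp add: cong_def)
  finally show ?thesis .
qed



definition fpol :: "int \<Rightarrow> int \<Rightarrow> int poly" where "fpol e k = [:-k, -e, 1:]"

definition pc :: "int \<Rightarrow> int \<Rightarrow> int \<Rightarrow> int poly \<Rightarrow> int poly \<Rightarrow> bool" where
  "pc N e k p q \<longleftrightarrow> (\<exists>A B. p - q = [:N:] * A + fpol e k * B)"

lemma pc_refl: "pc N e k p p"
  unfolding pc_def by (rule exI[of _ 0], rule exI[of _ 0]) simp

lemma pc_sym: "pc N e k p q \<Longrightarrow> pc N e k q p"
  unfolding pc_def
proof (elim exE)
  fix A B assume "p - q = [:N:] * A + fpol e k * B"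
  then have "q - p = [:N:] * (-A) + fpol e k * (-B)" by (simp add: algebra_simps smult_add_right)
  then show "\<exists>A B. q - p = [:N:] * A + fpol e k * B" by blast
qed

lemma pc_trans: "pc N e k p q \<Longrightarrow> pc N e k q r \<Longrightarrow> pc N e k p r"
  unfolding pc_def
proof (elim exE)
  fix A B A' B' assume "p - q = [:N:] * A + fpol e k * B" "q - r = [:N:] * A' + fpol e k * B'"
  then have "p - r = [:N:] * (A + A') + fpol e k * (B + B')" by (simp add: algebra_simps smult_add_right)
  then show "\<exists>A B. p - r = [:N:] * A + fpol e k * B" by blast
qed

lemma pc_add: "pc N e k p q \<Longrightarrow> pc N e k p' q' \<Longrightarrow> pc N e k (p + p') (q + q')"
  unfolding pc_def
proof (elim exE)
  fix A B A' B' assume "p - q = [:N:] * A + fpol e k * B" "p' - q' = [:N:] * A' + fpol e k * B'"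
  then have "(p + p') - (q + q') = [:N:] * (A + A') + fpol e k * (B + B')" by (simp add: algebra_simps smult_add_right)
  then show "\<exists>A B. (p + p') - (q + q') = [:N:] * A + fpol e k * B" by blast
qed

lemma pc_mult: "pc N e k p q \<Longrightarrow> pc N e k p' q' \<Longrightarrow> pc N e k (p * p') (q * q')"
  unfolding pc_def
proof (elim exE)
  fix A B A' B' assume h: "p - q = [:N:] * A + fpol e k * B" "p' - q' = [:N:] * A' + fpol e k * B'"
  have "p * p' - q * q' = (p - q) * p' + q * (p' - q')" by (simp add: algebra_simps smult_add_right)
  also have "\<dots> = [:N:] * (A * p' + q * A') + fpol e k * (B * p' + q * B')"
    unfolding h by (simp add: algebra_simps smult_add_right)
  finally show "\<exists>A B. p * p' - q * q' = [:N:] * A + fpol e k * B" by blast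
qed

lemma pc_pow: "pc N e k p q \<Longrightarrow> pc N e k (p ^ n) (q ^ n)"
  by (induction n) (auto intro: pc_mult pc_refl)

lemma pc_N: "pc N e k (p + [:N:] * A) p"
  unfolding pc_def by (rule exI[of _ A], rule exI[of _ 0]) simp

lemma pc_f: "pc N e k (p + fpol e k * B) p"
  unfolding pc_def by (rule exI[of _ 0], rule exI[of _ B]) simp

lemma pc_const: "[c = c'] (mod N) \<Longrightarrow> pc N e k [:c:] [:c':]"
proof -
  assume "[c = c'] (mod N)"
  then obtain t where t: "c = c' + N * t" 
    by (metis cong_iff_lin cong_sym)
  have "[:c:] = [:c':] + [:N:] * [:t:]" using t by simp
  then show ?thesis using pc_N by metis
qed

lemma pc_inj:
  assumes "pc N e k [:a, b:] [:c, d:]"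
  shows "N dvd (a - c) \<and> N dvd (b - d)"
proof -
  obtain A B where AB: "[:a, b:] - [:c, d:] = [:N:] * A + fpol e k * B"
    using assms unfolding pc_def by blast
  have f0: "fpol e k \<noteq> 0" and fd: "degree (fpol e k) = 2" and fl: "coeff (fpol e k) (degree (fpol e k)) = 1"
    by (auto simp: fpol_def)
  obtain q r where qr: "pseudo_divmod A (fpol e k) = (q, r)" by (cases "pseudo_divmod A (fpol e k)") auto
  from pseudo_divmod[OF f0 qr] fl have Aq: "A = fpol e k * q + r" and rd: "r = 0 \<or> degree r < 2"
    using fd by auto
  have eq: "[:a - c, b - d:] - [:N:] * r = fpol e k * ([:N:] * q + B)"
    using AB unfolding Aq by (simp add: algebra_simps smult_add_right)
  have C0: "[:N:] * q + B = 0"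
  proof (rule ccontr)
    assume "[:N:] * q + B \<noteq> 0"
    then have "degree (fpol e k * ([:N:] * q + B)) \<ge> 2" using f0 fd by (simp add: degree_mult_eq)
    moreover have "degree ([:a - c, b - d:] - [:N:] * r) \<le> 1"
      using rd by (intro degree_diff_le) (auto simp: degree_mult_le order.trans[OF degree_mult_le])
    ultimately show False using eq by simp
  qed
  with eq have "[:a - c, b - d:] = [:N:] * r" by simp
  then have "coeff [:a - c, b - d:] 0 = N * coeff r 0" "coeff [:a - c, b - d:] 1 = N * coeff r 1" by simp_all
  then show ?thesis by simp
qed



lemmas [trans] = pc_trans


lemma pc_cancel2:
  assumes "odd N" "pc N e k ([:2:] * P) ([:2:] * Q)"
  shows "pc N e k P Q"
proof -
  define t where "t = (N + 1) div 2"
  have t2: "2 * t = N + 1" using assms(1) unfolding t_def by presburger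
  have "[:t:] * ([:2:] * P) = smult (2 * t) P" by (simp add: mult.commute)
  also have "\<dots> = P + [:N:] * P" unfolding t2 by (simp add: smult_add_left)
  finally have "[:t:] * ([:2:] * P) = P + [:N:] * P" .
  moreover have "[:t:] * ([:2:] * Q) = smult (2 * t) Q" by (simp add: mult.commute)
  moreover have "smult (2 * t) Q = Q + [:N:] * Q" unfolding t2 by (simp add: smult_add_left)
  moreover have "pc N e k ([:t:] * ([:2:] * P)) ([:t:] * ([:2:] * Q))"
    by (rule pc_mult[OF pc_refl assms(2)])
  ultimately show ?thesis by (metis pc_N pc_sym pc_trans)
qed

lemma pc_binom:
  assumes "prime N"
  shows "pc N e k ((p + q) ^ nat N) (p ^ nat N + q ^ nat N)"
proof -
  have pn: "prime (nat N)" using assms by simp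
  have N0: "N \<ge> 0" using assms prime_ge_0_int by blast
  obtain A where A: "(p + q) ^ nat N = p ^ nat N + q ^ nat N + of_nat (nat N) * A"
    using binom_prime[OF pn] by blast
  have "(of_nat (nat N) :: int poly) = [:N:]" using N0 by (simp add: of_nat_poly)
  then show ?thesis using A pc_N by metis
qed

lemma pc_X_pow:
  assumes "prime N" "odd N" "[(e^2 + 4*k) ^ nat ((N-1) div 2) = -1] (mod N)"
  shows "pc N e k ([:0,1:] ^ nat N) [:e, -1:]"
proof -
  define h where "h = nat ((N-1) div 2)"
  define Y where "Y = [:-e, 2:]"
  define \<Delta> where "\<Delta> = e^2 + 4*k"
  have N2: "N \<ge> 2" using assms(1) prime_ge_2_int by blast
  have nN: "nat N = Suc (2 * h)" using N2 assms(2) unfolding h_def by (auto elim!: oddE)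
  have "Y^2 = [:\<Delta>:] + fpol e k * [:4:]"
    unfolding Y_def \<Delta>_def fpol_def by (simp add: power2_eq_square algebra_simps)
  then have Y2: "pc N e k (Y^2) [:\<Delta>:]" using pc_f by metis
  have "Y ^ nat N = Y * (Y^2)^h" unfolding nN by (simp add: power_mult)
  moreover have "pc N e k (Y * (Y^2)^h) (Y * [:\<Delta>:]^h)"
    by (rule pc_mult[OF pc_refl pc_pow[OF Y2]])
  moreover have "[:\<Delta>:]^h = [:\<Delta>^h:]" by (simp add: poly_const_pow)
  moreover have "pc N e k [:\<Delta>^h:] [:-1:]"
    using assms(3) unfolding h_def \<Delta>_def by (rule pc_const)
  ultimately have YN: "pc N e k (Y ^ nat N) (-Y)"
    by (metis pc_mult pc_refl pc_trans mult.right_neutral mult_minus_right pCons_one minus_pCons minus_zero)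
  have e1: "pc N e k ([:e:] ^ nat N) [:e:]"
    unfolding poly_const_pow by (rule pc_const[OF fermat_int[OF assms(1)]])
  have "pc N e k ((Y + [:e:]) ^ nat N) (Y ^ nat N + [:e:] ^ nat N)"
    by (rule pc_binom[OF assms(1)])
  also have "pc N e k (Y ^ nat N + [:e:] ^ nat N) (-Y + [:e:])"
    by (rule pc_add[OF YN e1])
  finally have 1: "pc N e k ((Y + [:e:]) ^ nat N) (-Y + [:e:])" .
  have eqY: "Y + [:e:] = [:2:] * [:0,1:]" unfolding Y_def by simp
  have "(Y + [:e:]) ^ nat N = [:2 ^ nat N:] * [:0,1:] ^ nat N"
    by (simp only: eqY power_mult_distrib poly_const_pow)
  moreover have "pc N e k ([:2 ^ nat N:] * [:0,1:] ^ nat N) ([:2:] * [:0,1:] ^ nat N)"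
    by (rule pc_mult[OF pc_const[OF fermat_int[OF assms(1)]] pc_refl])
  moreover have "-Y + [:e:] = [:2:] * [:e, -1:]" unfolding Y_def by simp
  ultimately have "pc N e k ([:2:] * [:0,1:] ^ nat N) ([:2:] * [:e, -1:])"
    using 1 by (metis pc_sym pc_trans)
  then show ?thesis by (rule pc_cancel2[OF assms(2)])
qed

lemma pc_frob:
  assumes "prime N" "odd N" "[(e^2 + 4*k) ^ nat ((N-1) div 2) = -1] (mod N)"
  shows "pc N e k ([:a, b:] ^ nat N) [:a + b * e, -b:]"
proof -
  have "[:a, b:] = [:a:] + [:b:] * [:0,1:]" by simp
  then have "pc N e k ([:a, b:] ^ nat N) ([:a:] ^ nat N + ([:b:] * [:0,1:]) ^ nat N)"
    using pc_binom[OF assms(1)] by metis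
  also have "[:a:] ^ nat N + ([:b:] * [:0,1:]) ^ nat N = [:a ^ nat N:] + [:b ^ nat N:] * [:0,1:] ^ nat N"
    by (simp only: power_mult_distrib poly_const_pow)
  also have "pc N e k \<dots> ([:a:] + [:b:] * [:e, -1:])"
    by (intro pc_add pc_mult pc_const fermat_int assms(1) pc_X_pow[OF assms])
  also have "[:a:] + [:b:] * [:e, -1:] = [:a + b * e, -b:]" by (simp add: algebra_simps)
  finally show ?thesis .
qed

lemma pc_norm:
  assumes "prime N" "odd N" "[(e^2 + 4*k) ^ nat ((N-1) div 2) = -1] (mod N)"
  shows "pc N e k ([:a, b:] ^ (nat N + 1)) [:a^2 + e*a*b - k*b^2:]"
proof -
  have "[:a, b:] ^ (nat N + 1) = [:a, b:] ^ nat N * [:a, b:]" by simp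
  also have "pc N e k \<dots> ([:a + b * e, -b:] * [:a, b:])"
    by (rule pc_mult[OF pc_frob[OF assms] pc_refl])
  also have "[:a + b * e, -b:] * [:a, b:] = [:a^2 + e*a*b - k*b^2:] + fpol e k * [:-(b^2):]"
    unfolding fpol_def by (simp add: algebra_simps power2_eq_square)
  also have "pc N e k \<dots> [:a^2 + e*a*b - k*b^2:]" by (rule pc_f)
  finally show ?thesis .
qed



definition ee :: "int \<Rightarrow> int" where "ee D = (if D mod 4 = 1 then 1 else 0)"
definition kk :: "int \<Rightarrow> int" where "kk D = (if D mod 4 = 1 then (D - 1) div 4 else D)"
definition Lp :: "qelem \<Rightarrow> int poly" where "Lp x = [:fst x, snd x:]"

lemma qmul_alt: "qmul N D x y = qred N (fst x * fst y + kk D * snd x * snd y,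
    fst x * snd y + snd x * fst y + ee D * snd x * snd y)"
  by (cases x; cases y) (simp add: qmul_def kk_def ee_def algebra_simps)

lemma pc_qred: "pc N e k (Lp (qred N (a, b))) [:a, b:]"
proof -
  have "Lp (qred N (a, b)) = [:a, b:] + [:N:] * [:-(a div N), -(b div N):]"
    by (simp add: Lp_def qred_def algebra_simps minus_mult_div_eq_mod[symmetric])
  then show ?thesis using pc_N by metis
qed

lemma pc_qmul: "pc N (ee D) (kk D) (Lp (qmul N D x y)) (Lp x * Lp y)"
proof -
  obtain a b where x: "x = (a, b)" by force
  obtain c d where y: "y = (c, d)" by force
  have "Lp x * Lp y = [:a * c + kk D * b * d, a * d + b * c + ee D * b * d:] + fpol (ee D) (kk D) * [:b * d:]"
    unfolding x y Lp_def fpol_def by (simp add: algebra_simps)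
  then have "pc N (ee D) (kk D) (Lp x * Lp y) [:a * c + kk D * b * d, a * d + b * c + ee D * b * d:]"
    using pc_f by metis
  moreover have "pc N (ee D) (kk D) (Lp (qmul N D x y)) [:a * c + kk D * b * d, a * d + b * c + ee D * b * d:]"
    unfolding qmul_alt x y by (simp add: pc_qred)
  ultimately show ?thesis by (metis pc_sym pc_trans)
qed

lemma Lp_qone: "N > 1 \<Longrightarrow> Lp (qone N) = 1"
  by (simp add: Lp_def qone_def qred_def one_pCons)

lemma pc_qpow: "N > 1 \<Longrightarrow> pc N (ee D) (kk D) (Lp (qpow N D w n)) (Lp w ^ n)"
proof (induction n)
  case 0
  then show ?case by (simp add: Lp_qone pc_refl)
next
  case (Suc n)
  have "pc N (ee D) (kk D) (Lp (qpow N D w (Suc n))) (Lp w * Lp (qpow N D w n))"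
    by (simp add: pc_qmul)
  also have "pc N (ee D) (kk D) (Lp w * Lp (qpow N D w n)) (Lp w * Lp w ^ n)"
    by (rule pc_mult[OF pc_refl Suc.IH[OF Suc.prems]])
  finally show ?case by simp
qed

lemma qred_in: "N > 0 \<Longrightarrow> qred N x \<in> qI N"
  by (simp add: qred_def qI_def)

lemma qpow_in: "N > 0 \<Longrightarrow> qpow N D w n \<in> qI N"
  by (cases n) (auto simp: qone_def qmul_def qred_in split: prod.splits)

lemma range_dvd_eq: fixes a c N :: int
  assumes "N dvd (a - c)" "0 \<le> a" "a < N" "0 \<le> c" "c < N"
  shows "a = c"
proof -
  have "[a = c] (mod N)" using assms(1) by (simp add: cong_iff_dvd_diff)
  then show ?thesis using assms by (simp add: cong_def)
qed

lemma pc_eq: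
  assumes "x \<in> qI N" "y \<in> qI N" "pc N e k (Lp x) (Lp y)"
  shows "x = y"
proof -
  obtain a b where x: "x = (a, b)" by force
  obtain c d where y: "y = (c, d)" by force
  from pc_inj assms(3) have "N dvd (a - c) \<and> N dvd (b - d)" unfolding x y Lp_def by auto
  then show ?thesis using assms(1,2) unfolding x y qI_def
    using range_dvd_eq by auto
qed



lemma prime_odd_not_dvd2: fixes N :: int assumes "prime N" "odd N" shows "\<not> N dvd 2"
proof
  assume "N dvd 2"
  then have "N \<le> 2" by (simp add: zdvd_imp_le)
  moreover have "N \<ge> 2" using assms(1) prime_ge_2_int by blast
  ultimately have "N = 2" by simp
  then show False using assms(2) by simp
qed

lemma fermat_int1:
  fixes N b :: int
  assumes "prime N" "\<not> N dvd b"
  shows "[b ^ (nat N - 1) = 1] (mod N)"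
proof -
  have N0: "nat N > 0" using assms(1) prime_gt_0_int by simp
  have cop: "coprime b N" using assms prime_imp_coprime[of N b] by (simp add: ac_simps)
  have "b ^ nat N = b * b ^ (nat N - 1)" using N0 by (metis Suc_diff_1 power_Suc)
  then have "[b * b ^ (nat N - 1) = b * 1] (mod N)" using fermat_int[OF assms(1), of b] by simp
  then show ?thesis using cong_mult_lcancel[OF cop] by blast
qed

lemma delta_pow:
  fixes N D :: int
  assumes "prime N" "odd N" "Legendre D N = -1"
  shows "[(ee D ^ 2 + 4 * kk D) ^ nat ((N - 1) div 2) = -1] (mod N)"
proof -
  define h where "h = nat ((N - 1) div 2)"
  have N3: "N \<ge> 3" using assms(1,2) prime_ge_2_int[OF assms(1)] by (auto elim!: oddE)
  have pn: "prime (nat N)" using assms(1) by simp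
  have "[Legendre D (int (nat N)) = D ^ ((nat N - 1) div 2)] (mod int (nat N))"
    by (rule euler_criterion[OF pn]) (use N3 in simp)
  moreover have "(nat N - 1) div 2 = h" unfolding h_def using N3 by (simp add: nat_div_distrib nat_diff_distrib)
  ultimately have Dh: "[D ^ h = -1] (mod N)" using N3 assms(3) by (simp add: cong_sym)
  show ?thesis
  proof (cases "D mod 4 = 1")
    case True
    then have "ee D ^ 2 + 4 * kk D = D" unfolding ee_def kk_def by simp presburger
    then show ?thesis using Dh unfolding h_def by simp
  next
    case False
    then have d4: "ee D ^ 2 + 4 * kk D = 4 * D" unfolding ee_def kk_def by simp
    have p4: "(4 * D) ^ h = 2 ^ (nat N - 1) * D ^ h"
    proof -
      have "nat N - 1 = 2 * h" unfolding h_def using N3 assms(2) by (auto elim!: oddE)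
      then show ?thesis by (simp add: power_mult_distrib power_mult)
    qed
    have c: "[2 ^ (nat N - 1) * D ^ h = 1 * (-1)] (mod N)"
      by (rule cong_mult[OF fermat_int1[OF assms(1) prime_odd_not_dvd2[OF assms(1,2)]] Dh])
    show ?thesis unfolding h_def[symmetric] d4 p4 using c by simp
  qed
qed



lemma not_dvd_small: fixes N :: int assumes "prime N" "odd N" "N dvd 4 \<or> N dvd 2" shows False
proof -
  have "N dvd 2"
  proof (cases "N dvd 4")
    case True
    then have "N dvd 2 * 2" by simp
    then show ?thesis using assms(1) prime_dvd_mult_iff by blast
  qed (use assms(3) in auto)
  then show False using prime_odd_not_dvd2[OF assms(1,2)] by simp
qed

lemma sq_one:
  fixes N e k :: int
  assumes "prime N" "odd N" "[(e^2 + 4*k) ^ nat ((N-1) div 2) = -1] (mod N)"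
    and "x \<in> qI N" and "pc N e k (Lp x * Lp x) 1"
  shows "x = qone N \<or> x = qneg_one N"
proof -
  obtain a b where x: "x = (a, b)" by force
  have N3: "N \<ge> 3" using assms(1,2) prime_ge_2_int[OF assms(1)] by (auto elim!: oddE)
  have ra: "0 \<le> a" "a < N" and rb: "0 \<le> b" "b < N" using assms(4) unfolding x qI_def by auto
  have "Lp x * Lp x = [:a^2 + k*b^2, 2*a*b + e*b^2:] + fpol e k * [:b^2:]"
    unfolding x Lp_def fpol_def by (simp add: algebra_simps power2_eq_square)
  then have "pc N e k [:a^2 + k*b^2, 2*a*b + e*b^2:] (Lp x * Lp x)"
    using pc_f pc_sym by metis
  then have "pc N e k [:a^2 + k*b^2, 2*a*b + e*b^2:] [:1, 0:]"
    using assms(5) pc_trans by (simp add: one_pCons)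
  then have d: "N dvd (a^2 + k*b^2 - 1)" "N dvd (2*a*b + e*b^2 - 0)" using pc_inj by blast+
  have "2*a*b + e*b^2 - 0 = b * (2*a + e*b)" by (simp add: algebra_simps power2_eq_square)
  with d(2) have "N dvd b \<or> N dvd (2*a + e*b)" using assms(1) prime_dvd_mult_iff by metis
  then show ?thesis
  proof
    assume "N dvd b"
    then have b0: "b = 0" using range_dvd_eq[of N b 0] rb N3 by simp
    then have "N dvd (a - 1) * (a + 1)" using d(1) by (simp add: algebra_simps power2_eq_square)
    then have "N dvd (a - 1) \<or> N dvd (a + 1)"
      using assms(1) prime_dvd_mult_iff by blast
    moreover have "N dvd (a + 1) \<Longrightarrow> N dvd (a - (N - 1))"
    proof -
      assume "N dvd (a + 1)"
      then have "N dvd ((a + 1) - N)" by (simp add: dvd_diff)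
      then show ?thesis by (simp add: algebra_simps)
    qed
    ultimately have "N dvd (a - 1) \<or> N dvd (a - (N - 1))" by blast
    moreover have "N dvd (a - 1) \<Longrightarrow> a = 1" using range_dvd_eq[of N a 1] ra N3 by simp
    moreover have "N dvd (a - (N - 1)) \<Longrightarrow> a = N - 1" using range_dvd_eq[of N a "N - 1"] ra N3 by simp
    ultimately have "a = 1 \<or> a = N - 1" by blast
    moreover have "qone N = (1, 0)" using N3 by (simp add: qone_def qred_def)
    moreover have "qneg_one N = (N - 1, 0)" using N3 by (simp add: qneg_one_def qred_def zmod_minus1)
    ultimately show ?thesis unfolding x b0 by auto
  next
    assume h2: "N dvd (2*a + e*b)"
    define \<Delta> where "\<Delta> = e^2 + 4*k"
    define h where "h = nat ((N-1) div 2)"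
    have "\<Delta> * b^2 - 4 = 4 * (a^2 + k*b^2 - 1) - (2*a - e*b) * (2*a + e*b)"
      unfolding \<Delta>_def by (simp add: algebra_simps power2_eq_square)
    then have "N dvd (\<Delta> * b^2 - 4)" using d(1) h2 by (metis dvd_diff dvd_mult dvd_mult2)
    then have c: "[\<Delta> * b^2 = 4] (mod N)" by (simp add: cong_iff_dvd_diff)
    show ?thesis
    proof (cases "N dvd b")
      case True
      then have "N dvd \<Delta> * b^2" by (simp add: power2_eq_square)
      then have "[\<Delta> * b^2 = 0] (mod N)" by (simp add: cong_0_iff)
      then have "[4 = 0] (mod N)" using c by (metis cong_sym cong_trans)
      then have "N dvd 4" by (simp add: cong_0_iff)
      then show ?thesis using not_dvd_small[OF assms(1,2)] by blast
    next
      case False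
      have hh: "nat N - 1 = 2 * h" unfolding h_def using N3 assms(2) by (auto elim!: oddE)
      have "[(\<Delta> * b^2) ^ h = 4 ^ h] (mod N)" using c by (rule cong_pow)
      moreover have "(\<Delta> * b^2) ^ h = \<Delta> ^ h * b ^ (nat N - 1)"
        unfolding hh by (simp add: power_mult_distrib power_mult)
      moreover have "(4::int) ^ h = 2 ^ (nat N - 1)"
        unfolding hh by (simp add: power_mult)
      moreover have "[\<Delta> ^ h * b ^ (nat N - 1) = (-1) * 1] (mod N)"
        using cong_mult[OF assms(3)[folded \<Delta>_def h_def] fermat_int1[OF assms(1) False]] .
      moreover have "[2 ^ (nat N - 1) = (1::int)] (mod N)"
        by (rule fermat_int1[OF assms(1) prime_odd_not_dvd2[OF assms(1,2)]])
      ultimately have "[-1 = 1] (mod N)" by (metis cong_sym cong_trans mult.right_neutral)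
      then have "N dvd 2" by (simp add: cong_iff_dvd_diff)
      then show ?thesis using not_dvd_small[OF assms(1,2)] by blast
    qed
  qed
qed



theorem theorem1p4:
  fixes N D :: int and s u :: nat and w :: qelem
  assumes "prime N" and "odd N"
    and "squarefree D"
    and "Legendre D N = -1"
    and "N + 1 = 2 ^ s * int u" and "odd u" and "s \<ge> 1"
    and "w \<in> qG N D - {qone N, qneg_one N}"
  shows "qpow N D w u = qone N \<or>
         (\<exists>r<s. qpow N D w (2 ^ r * u) = qneg_one N)"
proof -
  let ?e = "ee D" and ?k = "kk D"
  have N3: "N \<ge> 3" using assms(1,2) prime_ge_2_int[OF assms(1)] by (auto elim!: oddE)
  have dl: "[(?e^2 + 4 * ?k) ^ nat ((N-1) div 2) = -1] (mod N)"
    by (rule delta_pow[OF assms(1,2,4)])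
  have wI: "w \<in> qI N" and wn: "[qnorm D w = 1] (mod N)" using assms(8) unfolding qG_def by auto
  obtain a b where w: "w = (a, b)" by force
  have "qnorm D w = a^2 + ?e * a * b - ?k * b^2"
  proof (cases "D mod 4 = 1")
    case True
    then have "(1 - D) div 4 = - ((D - 1) div 4)" by presburger
    then show ?thesis using True unfolding w qnorm_def ee_def kk_def by simp
  qed (simp add: w qnorm_def ee_def kk_def)
  with wn have wn': "[a^2 + ?e * a * b - ?k * b^2 = 1] (mod N)" by simp
  have "int (nat N + 1) = int (2 ^ s * u)" using assms(5) N3 by simp
  then have nN: "nat N + 1 = 2 ^ s * u" by (simp only: of_nat_eq_iff)
  have qoneI: "qone N \<in> qI N" using N3 unfolding qone_def by (simp add: qred_in)
  have "pc N ?e ?k (Lp (qpow N D w (nat N + 1))) (Lp w ^ (nat N + 1))"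
    by (rule pc_qpow) (use N3 in simp)
  also have "pc N ?e ?k (Lp w ^ (nat N + 1)) [:a^2 + ?e * a * b - ?k * b^2:]"
    unfolding w Lp_def fst_conv snd_conv by (rule pc_norm[OF assms(1,2) dl])
  also have "pc N ?e ?k [:a^2 + ?e * a * b - ?k * b^2:] [:1:]" by (rule pc_const[OF wn'])
  also have "[:1:] = Lp (qone N)" using N3 by (simp add: Lp_qone one_pCons)
  finally have pcq: "pc N ?e ?k (Lp (qpow N D w (nat N + 1))) (Lp (qone N))" .
  have qpI: "qpow N D w (nat N + 1) \<in> qI N" by (rule qpow_in) (use N3 in simp)
  have "qpow N D w (nat N + 1) = qone N" by (rule pc_eq[OF qpI qoneI pcq])
  then have Ps: "qpow N D w (2 ^ s * u) = qone N" unfolding nN[symmetric] .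
  show ?thesis
  proof (rule ccontr)
    assume neg: "\<not> ?thesis"
    define P where "P r \<longleftrightarrow> qpow N D w (2 ^ r * u) = qone N" for r
    define r0 where "r0 = (LEAST r. P r)"
    have Pr0: "P r0" unfolding r0_def by (rule LeastI[of P s]) (simp add: P_def Ps)
    have r0s: "r0 \<le> s" unfolding r0_def by (rule Least_le) (simp add: P_def Ps)
    have "r0 \<noteq> 0"
    proof
      assume "r0 = 0"
      then show False using Pr0 neg unfolding P_def by simp
    qed
    then obtain r' where r': "r0 = Suc r'" using not0_implies_Suc by blast
    have nP: "\<not> P r'" using not_less_Least[of r' P] unfolding r0_def[symmetric] r' by simp
    define x where "x = qpow N D w (2 ^ r' * u)"
    have xI: "x \<in> qI N" unfolding x_def using qpow_in N3 by simp
    have "pc N ?e ?k (Lp x * Lp x) (Lp w ^ (2 ^ r' * u) * Lp w ^ (2 ^ r' * u))"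
      unfolding x_def by (rule pc_mult[OF pc_qpow pc_qpow]) (use N3 in simp)+
    also have "Lp w ^ (2 ^ r' * u) * Lp w ^ (2 ^ r' * u) = Lp w ^ (2 ^ r0 * u)"
    proof -
      have "2 ^ r0 * u = 2 ^ r' * u + 2 ^ r' * u" unfolding r' by simp
      then show ?thesis by (simp only: power_add)
    qed
    also have "pc N ?e ?k (Lp w ^ (2 ^ r0 * u)) (Lp (qpow N D w (2 ^ r0 * u)))"
      by (rule pc_sym[OF pc_qpow]) (use N3 in simp)
    also have "Lp (qpow N D w (2 ^ r0 * u)) = 1" using Pr0 N3 unfolding P_def by (simp add: Lp_qone)
    finally have "x = qone N \<or> x = qneg_one N"
      using sq_one[OF assms(1,2) dl xI] by simp
    then show False using nP neg r' r0s unfolding P_def x_def by auto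
  qed
qed

end
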